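(* Let $n\ge 2$, $c\in\mathbb R$, $d>0$, $\overline K>K>0$, $\eta:=(\overline K-K)/4$, $v\in C^1(\mathbb R^n)$, and $\Gamma\subseteq{\rm C}(d,K)$. Let $Z_\star:=\{x'\in\overline{B^{n-1}_d}: {\rm r}(x')\cap\{v=c\}\ne\varnothing\}$. Suppose that $\{v=c\}\cap{\rm C}(d,\overline K)\ne\varnothing$, that $\{v=c\}\cap{\rm C}(d,\overline K)\subseteq\Gamma_\eta:=\bigcup_{p\in\Gamma}B_\eta(p)$, and that $\partial_n v(x)>0$ for all $x\in\mathbb R^n$. Then $Z_\star=\overline{B^{n-1}_d}$.
   Context: Points of $\mathbb R^n$ are written $x=(x',x_n)\in\mathbb R^{n-1}\times\mathbb R$, and $\partial_n=\partial/\partial x_n$. For $d,h>0$, ${\rm C}(d,h):=\{x\in\mathbb R^n: |x'|<d,\ |x_n|<h\}$. $B^{n-1}_d$ is the open ball of radius $d$ centered at $0$ in $\mathbb R^{n-1}$; $B_\eta(p)$ is the open ball in $\mathbb R^n$. For $x'\in\mathbb R^{n-1}$, ${\rm r}(x'):=\{(x',t): t\in\mathbb R\}$. *)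

theory Defs
  imports "HOL-Analysis.Analysis"
begin

text \<open>Points of R^n are modelled as pairs (x', x_n) :: (real^'m) \<times> real, with n - 1 = CARD('m) \<ge> 1.
  The product norm is Euclidean, so balls are the Euclidean balls of R^n.\<close>

definition cyl :: "real \<Rightarrow> real \<Rightarrow> ((real^'m) \<times> real) set" where
  "cyl d h = {x. norm (fst x) < d \<and> \<bar>snd x\<bar> < h}"

definition vline :: "real^'m \<Rightarrow> ((real^'m) \<times> real) set" where
  "vline x' = {(x', t) | t. True}"

end

theory Submission
  imports Defs
begin

lemma mono_line:
  fixes v :: "(real^'m) \<times> real \<Rightarrow> real"
    and v' :: "(real^'m) \<times> real \<Rightarrow> ((real^'m) \<times> real) \<Rightarrow>\<^sub>L real"
  assumes deriv: "\<And>x. (v has_derivative blinfun_apply (v' x)) (at x)"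
    and pos: "\<And>x. v' x (0, 1) > 0"
    and "a < b"
  shows "v (y, a) < v (y, b)"
proof (rule DERIV_pos_imp_increasing[OF \<open>a<b\<close>, where f="\<lambda>t. v (y,t)"])
  fix t :: real
  have d1: "((\<lambda>t. (y, t)) has_derivative (\<lambda>h. (0, h))) (at t)"
    by (auto intro!: derivative_eq_intros)
  have "((\<lambda>t. v (y, t)) has_derivative (\<lambda>h. blinfun_apply (v' (y,t)) (0, h))) (at t)"
    using has_derivative_compose[OF d1 deriv[of "(y,t)"]] by simp
  moreover have "(\<lambda>h. blinfun_apply (v' (y,t)) (0, h)) = (\<lambda>h. v' (y,t) (0,1) * h)"
  proof
    fix h :: real
    have "(0::real^'m, h) = h *\<^sub>R (0, 1)" by simp
    then show "blinfun_apply (v' (y,t)) (0, h) = v' (y,t) (0,1) * h"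
      by (metis blinfun.scaleR_right mult.commute real_scaleR_def)
  qed
  ultimately have "((\<lambda>t. v (y, t)) has_real_derivative v' (y,t) (0,1)) (at t)"
    by (simp add: has_field_derivative_def)
  then show "\<exists>z. ((\<lambda>t. v (y, t)) has_real_derivative z) (at t) \<and> z > 0"
    using pos by blast
qed


theorem corollary2p2:
  fixes v :: "(real^'m) \<times> real \<Rightarrow> real"
    and v' :: "(real^'m) \<times> real \<Rightarrow> ((real^'m) \<times> real) \<Rightarrow>\<^sub>L real"
    and \<Gamma> :: "((real^'m) \<times> real) set"
    and c d K Kbar \<eta> :: real
  assumes "d > 0" and "K > 0" and "Kbar > K"
    and "\<eta> = (Kbar - K) / 4"
    and deriv: "\<And>x. (v has_derivative blinfun_apply (v' x)) (at x)"
    and C1: "continuous_on UNIV v'"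
    and "\<Gamma> \<subseteq> cyl d K"
    and "{x. v x = c} \<inter> cyl d Kbar \<noteq> {}"
    and "{x. v x = c} \<inter> cyl d Kbar \<subseteq> (\<Union>p\<in>\<Gamma>. ball p \<eta>)"
    and pos: "\<And>x. v' x (0, 1) > 0"
  shows "{x'. x' \<in> cball 0 d \<and> vline x' \<inter> {x. v x = c} \<noteq> {}} = cball 0 d"
proof -
  define S where "S = {x. v x = c}"
  define L where "L = K + \<eta>"
  have LK: "L < Kbar" "0 < L" using assms(2,3,4) unfolding L_def by auto
  have cont: "continuous_on UNIV v"
    using deriv has_derivative_continuous continuous_at_imp_continuous_on by blast
  have contl: "continuous_on UNIV (\<lambda>z. v (z, a))" for a
    by (rule continuous_on_compose2[OF cont]) (intro continuous_on_Pair continuous_on_id continuous_on_const, simp)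
  have key: "\<bar>snd x\<bar> \<le> L" if "x \<in> S" "x \<in> cyl d Kbar" for x
  proof -
    have "x \<in> (\<Union>p\<in>\<Gamma>. ball p \<eta>)" using assms(9) that unfolding S_def by blast
    then obtain p where p: "p \<in> \<Gamma>" "dist p x < \<eta>" by auto
    have "\<bar>snd p\<bar> < K" using p assms(7) unfolding cyl_def by auto
    moreover have "\<bar>snd x - snd p\<bar> \<le> dist p x"
    proof -
      have "norm (snd (p - x)) \<le> norm (p - x)" using norm_snd_le[where x="fst (p-x)" and y="snd (p-x)"] by (simp only: prod.collapse)
      moreover have "norm (snd (p - x)) = \<bar>snd x - snd p\<bar>" by (simp add: abs_minus_commute)
      ultimately show ?thesis by (simp add: dist_norm)
    qed
    ultimately show ?thesis using p unfolding L_def by linarith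
  qed
  define B where "B = fst ` (S \<inter> (cball 0 d \<times> {-L..L}))"
  have "closed S" unfolding S_def
    using continuous_closed_preimage_constant[OF cont closed_UNIV] by simp
  then have "compact (S \<inter> (cball 0 d \<times> {-L..L}))"
    using closed_Int_compact compact_Times compact_cball compact_Icc by blast
  then have "compact B" unfolding B_def
    using compact_continuous_image continuous_on_fst continuous_on_id by blast
  then have clB: "closed B" by (rule compact_imp_closed)
  define A where "A = ball 0 d \<inter> B"
  have inB: "z \<in> B" if "z \<in> ball 0 d" "v (z, s) = c" "\<bar>s\<bar> < Kbar" for z s
  proof -
    have "(z, s) \<in> S" "(z,s) \<in> cyl d Kbar" using that unfolding S_def cyl_def by auto
    then have "\<bar>snd (z,s)\<bar> \<le> L" by (rule key)
    then have "\<bar>s\<bar> \<le> L" by simp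
    then show ?thesis unfolding B_def using that \<open>(z, s) \<in> S\<close>
      by (intro image_eqI[of _ _ "(z,s)"]) auto
  qed
  have "open A"
  proof (subst open_subopen, intro ballI)
    fix y assume "y \<in> A"
    then obtain t where t: "y \<in> ball 0 d" "v (y, t) = c" "\<bar>t\<bar> \<le> L"
      unfolding A_def B_def S_def by auto
    define e where "e = (Kbar - L) / 2"
    have e: "e > 0" using LK unfolding e_def by auto
    define U where "U = ball 0 d \<inter> {z. v (z, t - e) < c} \<inter> {z. c < v (z, t + e)}"
    have "open U" unfolding U_def
      by (intro open_Int open_ball open_Collect_less contl continuous_on_const)
    moreover have "y \<in> U"
    proof -
      have "v (y, t-e) < v (y, t)" by (rule mono_line[OF deriv pos]) (use e in simp)
      moreover have "v (y, t) < v (y, t+e)" by (rule mono_line[OF deriv pos]) (use e in simp)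
      ultimately show ?thesis unfolding U_def using t(1,2) by simp
    qed
    moreover have "U \<subseteq> A"
    proof
      fix z assume z: "z \<in> U"
      have cz: "continuous_on {t-e..t+e} (\<lambda>s. v (z, s))"
        by (rule continuous_on_compose2[OF cont]) (intro continuous_on_Pair continuous_on_id continuous_on_const, simp)
      have zz: "v (z, t-e) \<le> c" "c \<le> v (z, t+e)" "t-e \<le> t+e" using z e unfolding U_def by auto
      obtain s where s: "t - e \<le> s" "s \<le> t + e" "v (z, s) = c"
        using IVT'[of "\<lambda>s. v (z, s)" "t-e" c "t+e", OF zz cz] by blast
      have t1: "t \<le> L" "-t \<le> L" using t(3) by auto
      have "s < Kbar" using s(1,2) t1 LK unfolding e_def by (simp add: field_simps)
      have "-s < Kbar" using s(1,2) t1 LK unfolding e_def by (simp add: field_simps)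
      then have "\<bar>s\<bar> < Kbar" using \<open>s < Kbar\<close> by linarith
      then show "z \<in> A" using inB[of z s] z s unfolding U_def A_def by auto
    qed
    ultimately show "\<exists>T. open T \<and> y \<in> T \<and> T \<subseteq> A" by blast
  qed
  then have "openin (top_of_set (ball 0 d)) A"
    by (simp add: A_def open_subset)
  moreover have "closedin (top_of_set (ball 0 d)) A"
    unfolding A_def using clB closedin_closed_Int by blast
  moreover have "A \<noteq> {}"
  proof -
    obtain x where x: "x \<in> S" "x \<in> cyl d Kbar" using assms(8) unfolding S_def by auto
    have "fst x \<in> ball 0 d" using x unfolding cyl_def by auto
    moreover have "v (fst x, snd x) = c" "\<bar>snd x\<bar> < Kbar" using x unfolding S_def cyl_def by auto
    ultimately have "fst x \<in> B" using inB by blast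
    then show ?thesis using \<open>fst x \<in> ball 0 d\<close> unfolding A_def by blast
  qed
  ultimately have "A = ball 0 d"
    using connected_clopen[THEN iffD1, rule_format, OF connected_ball[of "0::real^'m" d], of A] by blast
  then have "ball 0 d \<subseteq> B" unfolding A_def by auto
  then have "closure (ball 0 d) \<subseteq> B" using clB closure_minimal by blast
  then have cB: "cball 0 d \<subseteq> B" using \<open>d > 0\<close> by simp
  show ?thesis
  proof (intro equalityI subsetI)
    fix x' assume "x' \<in> cball (0::real^'m) d"
    then have "x' \<in> B" using cB by auto
    then obtain y where "y \<in> S" "x' = fst y" unfolding B_def by blast
    then obtain t where "v (x', t) = c" unfolding S_def by (metis mem_Collect_eq prod.collapse)
    then have "(x', t) \<in> vline x' \<inter> {x. v x = c}" unfolding vline_def by auto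
    then show "x' \<in> {x'. x' \<in> cball 0 d \<and> vline x' \<inter> {x. v x = c} \<noteq> {}}"
      using \<open>x' \<in> cball 0 d\<close> by blast
  qed auto
qed

end
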